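(* For every $n\geq1$ and all $N\times N$ real symmetric positive semidefinite matrices $A_{1},\ldots,A_{n},X$, \[ \Delta_{A_{1}}\Delta_{A_{2}}\cdots\Delta_{A_{n}}\det(X)=\sum_{k=0}^{n}(-1)^{n-k}\sum_{1\leq i_{1}<\cdots<i_{k}\leq n}\det(A_{i_{1}}+\cdots+A_{i_{k}}+X)\geq0 \] (the $k=0$ term being $(-1)^n\det X$). In other words, the restriction of $\det$ to the cone of positive semidefinite $N\times N$ real symmetric matrices has positive differences of every order $n\geq0$.
   Context: $(\Delta_{H}f)(X)=f(X+H)-f(X)$. A function $f$ on a convex cone has positive differences of order $n\geq1$ if $\Delta_{H_1}\cdots\Delta_{H_n}f(X)\geq0$ for all $X,H_1,\ldots,H_n$ in the cone, and of order $0$ if $f\geq0$. *)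

theory Defs
  imports "HOL-Analysis.Analysis"
begin

definition Delta :: "'a::plus \<Rightarrow> ('a \<Rightarrow> real) \<Rightarrow> 'a \<Rightarrow> real" where
  "Delta H f X = f (X + H) - f X"

definition iter_Delta :: "(nat \<Rightarrow> 'a::plus) \<Rightarrow> nat \<Rightarrow> ('a \<Rightarrow> real) \<Rightarrow> 'a \<Rightarrow> real" where
  "iter_Delta A n f = foldr (\<lambda>i g. Delta (A i) g) [1..<n+1] f"

definition psd :: "real^'n^'n \<Rightarrow> bool" where
  "psd M \<longleftrightarrow> transpose M = M \<and> (\<forall>x. 0 \<le> x \<bullet> (M *v x))"

end

theory Submission
  imports Defs
begin

lemma iter_Delta_Suc:
  "iter_Delta A (Suc n) f = iter_Delta A n (Delta (A (Suc n)) f)"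
  unfolding iter_Delta_def by (simp add: upt_Suc_append)

lemma iter_Delta_expand:
  fixes A :: "nat \<Rightarrow> 'a::comm_monoid_add"
  shows "iter_Delta A n f X = (\<Sum>S\<in>Pow {1..n}. (-1) ^ (n - card S) * f ((\<Sum>i\<in>S. A i) + X))"
proof (induction n arbitrary: f)
  case 0
  then show ?case by (simp add: iter_Delta_def)
next
  case (Suc n)
  have fin: "finite (Pow {1..n})" by simp
  have ni: "Suc n \<notin> {1..n}" by simp
  have inj: "inj_on (insert (Suc n)) (Pow {1..n})"
    unfolding inj_on_def by (metis Diff_insert_absorb PowD ni subsetD)
  have disj: "Pow {1..n} \<inter> insert (Suc n) ` Pow {1..n} = {}" by auto
  have "iter_Delta A (Suc n) f X = (\<Sum>S\<in>Pow {1..n}. (-1) ^ (n - card S) *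
      (f ((\<Sum>i\<in>S. A i) + X + A (Suc n)) - f ((\<Sum>i\<in>S. A i) + X)))"
    by (simp add: iter_Delta_Suc Suc.IH Delta_def)
  also have "\<dots> = (\<Sum>S\<in>Pow {1..n}. (-1) ^ (Suc n - card S) * f ((\<Sum>i\<in>S. A i) + X))
     + (\<Sum>S\<in>Pow {1..n}. (-1) ^ (Suc n - card (insert (Suc n) S)) * f ((\<Sum>i\<in>insert (Suc n) S. A i) + X))"
  proof -
    have "(-1) ^ (n - card S) * (f ((\<Sum>i\<in>S. A i) + X + A (Suc n)) - f ((\<Sum>i\<in>S. A i) + X))
      = (-1) ^ (Suc n - card S) * f ((\<Sum>i\<in>S. A i) + X) +
        (-1) ^ (Suc n - card (insert (Suc n) S)) * f ((\<Sum>i\<in>insert (Suc n) S. A i) + X)"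
      if "S \<in> Pow {1..n}" for S
    proof -
      have fS: "finite S" "Suc n \<notin> S" using that finite_subset by auto
      have c: "card S \<le> n" using that by (metis PowD card_atLeastAtMost card_mono diff_Suc_1 finite_atLeastAtMost)
      have e1: "Suc n - card S = Suc (n - card S)" using c by simp
      have e2: "(\<Sum>i\<in>insert (Suc n) S. A i) + X = (\<Sum>i\<in>S. A i) + X + A (Suc n)"
        using fS by (simp add: add_ac)
      show ?thesis using fS by (simp add: e1 e2 algebra_simps)
    qed
    then show ?thesis by (simp add: sum.distrib[symmetric])
  qed
  also have "\<dots> = (\<Sum>S\<in>Pow {1..Suc n}. (-1) ^ (Suc n - card S) * f ((\<Sum>i\<in>S. A i) + X))" (is "?L = ?R")
  proof -
    have "{1..Suc n} = insert (Suc n) {1..n}" by auto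
    then have "(\<Sum>S\<in>Pow {1..Suc n}. (-1) ^ (Suc n - card S) * f ((\<Sum>i\<in>S. A i) + X))
      = (\<Sum>S\<in>Pow {1..n} \<union> insert (Suc n) ` Pow {1..n}. (-1) ^ (Suc n - card S) * f ((\<Sum>i\<in>S. A i) + X))"
      by (simp add: Pow_insert)
    also have "\<dots> = ?L"
      using disj inj by (subst sum.union_disjoint) (auto simp: sum.reindex)
    finally show ?thesis by simp
  qed
  finally show ?case .
qed

lemma group_card:
  fixes g :: "nat set \<Rightarrow> real"
  shows "(\<Sum>S\<in>Pow {1..n}. (-1) ^ (n - card S) * g S) =
     (\<Sum>k=0..n. (-1) ^ (n - k) * (\<Sum>S\<in>{S. S \<subseteq> {1..n} \<and> card S = k}. g S))" (is "_ = ?R")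
proof -
  have "(\<Sum>S\<in>Pow {1..n}. (-1) ^ (n - card S) * g S) =
     (\<Sum>k=0..n. (\<Sum>S\<in>{S\<in>Pow {1..n}. card S = k}. (-1) ^ (n - card S) * g S))"
    by (rule sum.group[symmetric]) (auto simp: card_mono[of "{1..n}", simplified] intro: order_trans[OF card_mono[of "{1..n}"]])
  also have "\<dots> = ?R"
    by (rule sum.cong) (auto simp: sum_distrib_left intro!: sum.cong)
  finally show ?thesis .
qed


definition outer :: "real^'n \<Rightarrow> real^'n^'n" where
  "outer u = (\<chi> i j. u$i * u$j)"

lemma outer_mulv: "outer u *v x = (u \<bullet> x) *s u"
  by (simp add: outer_def vec_eq_iff matrix_vector_mult_def inner_vec_def sum_distrib_left mult_ac)

lemma quad_expand:
  fixes M :: "real^'n^'n"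
  assumes "transpose M = M"
  shows "(a + t *s b) \<bullet> (M *v (a + t *s b)) = a \<bullet> (M *v a) + 2 * t * (a \<bullet> (M *v b)) + t^2 * (b \<bullet> (M *v b))"
proof -
  have sym: "b \<bullet> (M *v a) = a \<bullet> (M *v b)"
    by (metis assms dot_lmul_matrix inner_commute vector_transpose_matrix)
  have mt: "M *v (t *s b) = t *s (M *v b)"
    by (simp add: vec_eq_iff matrix_vector_mult_def sum_distrib_left mult_ac)
  show ?thesis
    by (simp add: matrix_vector_right_distrib mt inner_add_left inner_add_right
       scalar_mult_eq_scaleR sym power2_eq_square algebra_simps)
qed

lemma psd_zero_quad:
  fixes M :: "real^'n^'n"
  assumes "psd M" "b \<bullet> (M *v b) = 0"
  shows "a \<bullet> (M *v b) = 0"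
proof (rule ccontr)
  assume ne: "a \<bullet> (M *v b) \<noteq> 0"
  define t where "t = - (a \<bullet> (M *v a) + 1) / (2 * (a \<bullet> (M *v b)))"
  have "0 \<le> (a + t *s b) \<bullet> (M *v (a + t *s b))" using assms(1) unfolding psd_def by blast
  also have "\<dots> = a \<bullet> (M *v a) + 2 * t * (a \<bullet> (M *v b))"
    using quad_expand[of M a t b] assms unfolding psd_def by simp
  also have "\<dots> = -1" using ne by (simp add: t_def field_simps)
  finally show False by simp
qed

lemma outer_nth[simp]: "outer u $ i $ k = u$i * u$k"
  by (simp add: outer_def)

lemma axis_quad: "axis i 1 \<bullet> (M *v axis j 1) = (M::real^'n^'n) $ i $ j"
proof -
  have "M *v axis j 1 = column j M" by (rule matrix_vector_mult_basis)
  then show ?thesis by (simp add: column_def inner_commute[of "axis i 1"] inner_axis)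
qed

lemma psd_decomp:
  fixes X :: "real^'n^'n"
  assumes "psd X"
  shows "\<exists>(m::nat) v. X = (\<Sum>k<m. outer (v k))"
  using assms
proof (induction "card {j. X$j$j \<noteq> 0}" arbitrary: X rule: less_induct)
  case less
  have symX: "X$a$b = X$b$a" for a b
    using less.prems unfolding psd_def by (metis transpose_def vec_lambda_beta)
  have diag_nn: "0 \<le> X$a$a" for a
    using less.prems unfolding psd_def by (metis axis_quad)
  have zero_col: "X$i$k = 0" if "X$k$k = 0" for i k
    using psd_zero_quad[OF less.prems, of "axis k 1" "axis i 1"] that by (simp add: axis_quad)
  show ?case
  proof (cases "\<exists>j. X$j$j \<noteq> 0")
    case False
    then have "X = 0" using zero_col by (simp add: vec_eq_iff)
    then have "X = (\<Sum>k<(0::nat). outer (undefined k))" by simp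
    then show ?thesis by blast
  next
    case True
    then obtain j where "X$j$j \<noteq> 0" by blast
    define d where "d = X$j$j"
    have dpos: "d > 0" using diag_nn[of j] \<open>X$j$j \<noteq> 0\<close> unfolding d_def by linarith
    define c where "c = X *v axis j 1"
    have c_nth: "c$i = X$i$j" for i
      by (simp add: c_def matrix_vector_mult_basis column_def)
    have cj: "axis j 1 \<bullet> c = d" by (simp add: c_def axis_quad d_def)
    define u where "u = (1 / sqrt d) *s c"
    define X' where "X' = X - outer u"
    have X'_nth: "X'$a$b = X$a$b - c$a * c$b / d" for a b
      using dpos by (simp add: X'_def u_def power2_eq_square[symmetric] field_simps)
    have psdX': "psd X'"
      unfolding psd_def
    proof (intro conjI allI)
      show "transpose X' = X'"
        by (simp add: vec_eq_iff transpose_def X'_nth symX mult.commute)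
    next
      fix x :: "real^'n"
      define t where "t = - (x \<bullet> c) / d"
      have "0 \<le> (x + t *s axis j 1) \<bullet> (X *v (x + t *s axis j 1))"
        using less.prems unfolding psd_def by blast
      also have "\<dots> = x \<bullet> (X *v x) + 2 * t * (x \<bullet> c) + t^2 * d"
        using quad_expand[of X x t "axis j 1"] less.prems
        by (simp add: psd_def c_def[symmetric] cj)
      also have "\<dots> = x \<bullet> (X *v x) - (x \<bullet> c)^2 / d"
        using dpos by (simp add: t_def field_simps power2_eq_square)
      also have "\<dots> = x \<bullet> (X' *v x)"
      proof -
        have "x \<bullet> (outer u *v x) = (u \<bullet> x) * (x \<bullet> u)"
          by (simp add: outer_mulv scalar_mult_eq_scaleR)
        also have "\<dots> = (u \<bullet> x)^2"
          by (simp add: inner_commute[of x u] power2_eq_square)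
        also have "u \<bullet> x = (1 / sqrt d) * (x \<bullet> c)"
          by (simp add: u_def scalar_mult_eq_scaleR inner_commute[of c x])
        also have "((1 / sqrt d) * (x \<bullet> c))^2 = (x \<bullet> c)^2 / d"
          using dpos by (simp add: power_mult_distrib power_divide)
        finally show ?thesis
          by (simp add: X'_def matrix_vector_mult_diff_rdistrib inner_diff_right)
      qed
      finally show "0 \<le> x \<bullet> (X' *v x)" .
    qed
    have sub: "{k. X'$k$k \<noteq> 0} \<subseteq> {k. X$k$k \<noteq> 0} - {j}"
    proof
      fix k assume k: "k \<in> {k. X'$k$k \<noteq> 0}"
      have "X'$j$j = d - d * d / d" by (simp add: X'_nth c_nth d_def)
      then have "X'$j$j = 0" using dpos by simp
      moreover have "X$k$k \<noteq> 0"
      proof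
        assume "X$k$k = 0"
        then have "c$k = 0" using zero_col[where k=k and i=j] symX[of k j] by (simp add: c_nth)
        then have "X'$k$k = 0" using \<open>X$k$k = 0\<close> by (simp add: X'_nth)
        with k show False by simp
      qed
      ultimately show "k \<in> {k. X$k$k \<noteq> 0} - {j}" using k by auto
    qed
    have "card {k. X'$k$k \<noteq> 0} < card {k. X$k$k \<noteq> 0}"
    proof -
      have "card {k. X'$k$k \<noteq> 0} \<le> card ({k. X$k$k \<noteq> 0} - {j})"
        by (rule card_mono[OF _ sub]) simp
      also have "\<dots> < card {k. X$k$k \<noteq> 0}"
        using \<open>X$j$j \<noteq> 0\<close> by (intro card_Diff1_less) auto
      finally show ?thesis .
    qed
    from less.hyps[OF this psdX'] obtain m :: nat and v where mv: "X' = (\<Sum>k<m. outer (v k))" by blast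
    have "X = (\<Sum>k<Suc m. outer ((v(m := u)) k))"
      using mv by (simp add: X'_def algebra_simps)
    then show ?thesis by blast
  qed
qed


lemma PiE_UNIV_eq: "FuncSet.PiE UNIV (\<lambda>_. J) = {f. \<forall>i. f i \<in> J}"
  by (auto simp: PiE_def Pi_def extensional_def)

lemma det_rows_sum_gen:
  fixes a :: "'n \<Rightarrow> 'b \<Rightarrow> real^'n"
  assumes "finite J"
  shows "det ((\<chi> i. \<Sum>j\<in>J. a i j) :: real^'n^'n) = (\<Sum>f\<in>{f. \<forall>i. f i \<in> J}. det ((\<chi> i. a i (f i)) :: real^'n^'n))"
proof -
  let ?P = "{p. p permutes (UNIV::'n set)}"
  have "det ((\<chi> i. \<Sum>j\<in>J. a i j) :: real^'n^'n) = (\<Sum>p\<in>?P. of_int (sign p) * (\<Prod>i\<in>UNIV. \<Sum>j\<in>J. a i j $ p i))"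
    by (simp add: det_def sum_component)
  also have "\<dots> = (\<Sum>p\<in>?P. of_int (sign p) * (\<Sum>f\<in>{f. \<forall>i. f i \<in> J}. \<Prod>i\<in>UNIV. a i (f i) $ p i))"
    by (simp add: prod_sum_PiE[where A=UNIV and B="\<lambda>_. J"] assms PiE_UNIV_eq)
  also have "\<dots> = (\<Sum>f\<in>{f. \<forall>i. f i \<in> J}. \<Sum>p\<in>?P. of_int (sign p) * (\<Prod>i\<in>UNIV. a i (f i) $ p i))"
    by (simp add: sum_distrib_left sum.swap[of _ ?P])
  also have "\<dots> = (\<Sum>f\<in>{f. \<forall>i. f i \<in> J}. det ((\<chi> i. a i (f i)) :: real^'n^'n))"
    by (simp add: det_def)
  finally show ?thesis .
qed

definition wt :: "('b \<Rightarrow> real^'n) \<Rightarrow> ('n \<Rightarrow> 'b) \<Rightarrow> real" where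
  "wt u f = (\<Prod>i\<in>UNIV. u (f i) $ i) * det ((\<chi> i. u (f i)) :: real^'n^'n)"

lemma det_sum_outer:
  fixes u :: "'b \<Rightarrow> real^'n"
  assumes "finite J"
  shows "det (\<Sum>j\<in>J. outer (u j)) = (\<Sum>f\<in>{f. \<forall>i. f i \<in> J}. wt u f)"
proof -
  have "(\<Sum>j\<in>J. outer (u j)) = (\<chi> i. \<Sum>j\<in>J. (u j $ i) *s u j)"
    by (simp add: vec_eq_iff sum_component outer_def mult_ac)
  then have "det (\<Sum>j\<in>J. outer (u j)) = (\<Sum>f\<in>{f. \<forall>i. f i \<in> J}. det ((\<chi> i. (u (f i) $ i) *s u (f i)) :: real^'n^'n))"
    using det_rows_sum_gen[OF assms, of "\<lambda>i j. (u j $ i) *s u j"] by simp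
  also have "\<dots> = (\<Sum>f\<in>{f. \<forall>i. f i \<in> J}. wt u f)"
    by (simp add: det_rows_mul wt_def)
  finally show ?thesis .
qed

lemma wt_perm_sum:
  fixes u :: "'b \<Rightarrow> real^'n"
  shows "(\<Sum>p\<in>{p. p permutes (UNIV::'n set)}. wt u (f \<circ> p)) = (det ((\<chi> i. u (f i)) :: real^'n^'n))^2"
proof -
  define G where "G = ((\<chi> i. u (f i)) :: real^'n^'n)"
  have "wt u (f \<circ> p) = det G * (of_int (sign p) * (\<Prod>i\<in>UNIV. transpose G $ i $ p i))"
    if p: "p permutes (UNIV::'n set)" for p
  proof -
    have "((\<chi> i. u ((f \<circ> p) i)) :: real^'n^'n) = (\<chi> i. G $ p i)"
      by (simp add: G_def vec_eq_iff)
    then have "det ((\<chi> i. u ((f \<circ> p) i)) :: real^'n^'n) = of_int (sign p) * det G"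
      using det_permute_rows[OF p, of G] by simp
    then show ?thesis
      by (simp add: wt_def transpose_def G_def)
  qed
  then have "(\<Sum>p\<in>{p. p permutes (UNIV::'n set)}. wt u (f \<circ> p)) = det G * det (transpose G)"
    by (simp add: det_def sum_distrib_left)
  then show ?thesis by (simp add: G_def power2_eq_square)
qed

lemma wt_sum_nonneg:
  fixes u :: "'b \<Rightarrow> real^'n"
  assumes fin: "finite F"
    and cl: "\<And>f p. f \<in> F \<Longrightarrow> p permutes (UNIV::'n set) \<Longrightarrow> f \<circ> p \<in> F"
  shows "0 \<le> (\<Sum>f\<in>F. wt u f)"
proof -
  let ?P = "{p. p permutes (UNIV::'n set)}"
  have re: "(\<Sum>f\<in>F. wt u (f \<circ> p)) = (\<Sum>f\<in>F. wt u f)" if p: "p permutes (UNIV::'n set)" for p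
  proof (rule sum.reindex_bij_witness[where i="\<lambda>f. f \<circ> inv p" and j="\<lambda>f. f \<circ> p"])
    fix f assume "f \<in> F"
    show "f \<circ> p \<circ> inv p = f" using p by (simp add: o_assoc[symmetric] permutes_inverses(1) fun_eq_iff permutes_inv_o(1))
    show "f \<circ> p \<in> F" using cl[OF \<open>f \<in> F\<close> p] .
    show "wt u (f \<circ> p) = wt u (f \<circ> p)" by simp
  next
    fix f assume "f \<in> F"
    show "f \<circ> inv p \<circ> p = f" using p by (simp add: fun_eq_iff permutes_inverses(2))
    show "f \<circ> inv p \<in> F" using cl[OF \<open>f \<in> F\<close> permutes_inv[OF p]] .
  qed
  have "of_nat (card ?P) * (\<Sum>f\<in>F. wt u f) = (\<Sum>p\<in>?P. \<Sum>f\<in>F. wt u (f \<circ> p))"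
    using re by simp
  also have "\<dots> = (\<Sum>f\<in>F. \<Sum>p\<in>?P. wt u (f \<circ> p))"
    by (rule sum.swap)
  also have "\<dots> = (\<Sum>f\<in>F. (det ((\<chi> i. u (f i)) :: real^'n^'n))^2)"
    by (simp add: wt_perm_sum)
  also have "\<dots> \<ge> 0" by (simp add: sum_nonneg)
  finally have "0 \<le> of_nat (card ?P) * (\<Sum>f\<in>F. wt u f)" .
  moreover have "card ?P > 0"
    using finite_permutations[of "UNIV::'n set"] permutes_id[of "UNIV::'n set"]
    by (metis card_gt_0_iff empty_iff finite mem_Collect_eq)
  then have "real (card ?P) > 0" by simp
  ultimately show ?thesis by (metis zero_le_mult_iff not_le)
qed


lemma alt_sum:
  fixes U L :: "nat set"
  assumes "finite U" "L \<subseteq> U"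
  shows "(\<Sum>S\<in>{S. S \<subseteq> U \<and> L \<subseteq> S}. (-1::real) ^ (card U - card S)) = (if L = U then 1 else 0)"
proof (cases "L = U")
  case True
  then have "{S. S \<subseteq> U \<and> L \<subseteq> S} = {U}" by auto
  then show ?thesis using True by simp
next
  case False
  then have LU: "L \<subset> U" using assms by auto
  have fin: "finite {S. S \<subseteq> U \<and> L \<subseteq> S}" using assms(1) by simp
  have pw: "(-1::real) ^ (card U - card S) = (-1) ^ card U * (-1) ^ card S" if "S \<subseteq> U" for S
  proof -
    have c: "card S \<le> card U" using that assms(1) by (simp add: card_mono)
    have "(-1::real) ^ card U = (-1) ^ (card U - card S) * (-1) ^ card S"
      using c by (simp add: power_add[symmetric])
    then have "(-1::real) ^ card U * (-1) ^ card S = (-1) ^ (card U - card S) * ((-1) ^ card S * (-1) ^ card S)"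
      by simp
    also have "\<dots> = (-1) ^ (card U - card S)" by (simp add: power_add[symmetric])
    finally show ?thesis by simp
  qed
  have "(\<Sum>S\<in>{S. S \<subseteq> U \<and> L \<subseteq> S}. (-1::real) ^ (card U - card S)) =
      (-1) ^ card U * (\<Sum>S\<in>{S. S \<subseteq> U \<and> L \<subseteq> S}. (-1::real) ^ card S)"
    by (simp add: sum_distrib_left pw)
  also have "(\<Sum>S\<in>{S. S \<subseteq> U \<and> L \<subseteq> S}. (-1::real) ^ card S) = 0"
  proof (rule sum_alternating_cancels[OF fin])
    have "{x \<in> {S. S \<subseteq> U \<and> L \<subseteq> S}. even (card x)} = {T. T \<subseteq> U \<and> L \<subseteq> T \<and> even (card T)}" by auto
    moreover have "{x \<in> {S. S \<subseteq> U \<and> L \<subseteq> S}. odd (card x)} = {T. T \<subseteq> U \<and> L \<subseteq> T \<and> odd (card T)}" by auto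
    ultimately show "card {x \<in> {S. S \<subseteq> U \<and> L \<subseteq> S}. even (card x)} = card {x \<in> {S. S \<subseteq> U \<and> L \<subseteq> S}. odd (card x)}"
      using card_subsupersets_even_odd[OF assms(1) LU] by simp
  qed
  finally show ?thesis using False by simp
qed

theorem theorem5p6:
  fixes A :: "nat \<Rightarrow> real^'N^'N" and X :: "real^'N^'N" and n :: nat
  assumes "n \<ge> 1"
    and "\<And>i. i \<in> {1..n} \<Longrightarrow> psd (A i)"
    and "psd X"
  shows "iter_Delta A n det X =
           (\<Sum>k=0..n. (-1) ^ (n - k) *
              (\<Sum>S\<in>{S. S \<subseteq> {1..n} \<and> card S = k}. det ((\<Sum>i\<in>S. A i) + X)))
       \<and> iter_Delta A n det X \<ge> 0"
proof -
  let ?U = "{1..n}"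
  have E: "iter_Delta A n det X = (\<Sum>S\<in>Pow ?U. (-1) ^ (n - card S) * det ((\<Sum>i\<in>S. A i) + X))"
    by (rule iter_Delta_expand)
  define B where "B i = (if i = 0 then X else A i)" for i
  have psdB: "psd (B i)" if "i \<le> n" for i
    using assms(2,3) that by (cases "i = 0") (auto simp: B_def)
  have "\<forall>i. \<exists>mv::nat \<times> (nat \<Rightarrow> real^'N). i \<le> n \<longrightarrow> B i = (\<Sum>k<fst mv. outer (snd mv k))"
  proof
    fix i show "\<exists>mv::nat \<times> (nat \<Rightarrow> real^'N). i \<le> n \<longrightarrow> B i = (\<Sum>k<fst mv. outer (snd mv k))"
    proof (cases "i \<le> n")
      case True
      then obtain m :: nat and v where "B i = (\<Sum>k<m. outer (v k))" using psd_decomp[OF psdB[OF True]] by blast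
      then have "i \<le> n \<longrightarrow> B i = (\<Sum>k<fst (m, v). outer (snd (m, v) k))" by simp
      then show ?thesis by (rule exI)
    qed simp
  qed
  note ex = this
  define MV where "MV i = (SOME mv::nat \<times> (nat \<Rightarrow> real^'N). i \<le> n \<longrightarrow> B i = (\<Sum>k<fst mv. outer (snd mv k)))" for i
  have MV: "B i = (\<Sum>k<fst (MV i). outer (snd (MV i) k))" if "i \<le> n" for i
  proof -
    have "i \<le> n \<longrightarrow> B i = (\<Sum>k<fst (MV i). outer (snd (MV i) k))"
      unfolding MV_def by (rule someI_ex) (rule ex[rule_format])
    then show ?thesis using that by blast
  qed
  define m where "m i = fst (MV i)" for i
  define u where "u p = snd (MV (fst p)) (snd p)" for p
  define JS where "JS S = Sigma (insert 0 S) (\<lambda>i. {..<m i})" for S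
  have finJS: "finite (JS S)" if "S \<subseteq> ?U" for S
    unfolding JS_def using that finite_subset by (intro finite_SigmaI) auto
  have decS: "(\<Sum>i\<in>S. A i) + X = (\<Sum>p\<in>JS S. outer (u p))" if S: "S \<subseteq> ?U" for S
  proof -
    have fS: "finite S" "0 \<notin> S" using S finite_subset by auto
    have "(\<Sum>i\<in>S. A i) + X = (\<Sum>i\<in>insert 0 S. B i)"
    proof -
      have e1: "(\<Sum>i\<in>S. A i) = (\<Sum>i\<in>S. B i)" using fS(2) by (intro sum.cong refl) (auto simp: B_def)
      have e2: "(\<Sum>i\<in>insert 0 S. B i) = B 0 + (\<Sum>i\<in>S. B i)" using fS by simp
      show ?thesis by (simp only: e1 e2) (simp add: B_def add.commute)
    qed
    also have "\<dots> = (\<Sum>i\<in>insert 0 S. \<Sum>k<m i. outer (u (i, k)))"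
      using S by (intro sum.cong refl) (auto simp: MV m_def u_def)
    also have "\<dots> = (\<Sum>p\<in>JS S. outer (u p))"
      unfolding JS_def using fS by (subst sum.Sigma) (auto simp: split_def)
    finally show ?thesis .
  qed
  define FU where "FU = {f :: 'N \<Rightarrow> nat \<times> nat. \<forall>i. f i \<in> JS ?U}"
  have finFU: "finite FU"
    unfolding FU_def PiE_UNIV_eq[symmetric] using finJS[of ?U] by (intro finite_PiE) auto
  define L where "L f = fst ` range f - {0}" for f :: "'N \<Rightarrow> nat \<times> nat"
  have LU: "L f \<subseteq> ?U" if "f \<in> FU" for f
  proof -
    have fr: "fst (f r) \<in> insert 0 ?U" for r
    proof -
      have "f r \<in> JS ?U" using that unfolding FU_def by blast
      then show ?thesis unfolding JS_def by (cases "f r") auto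
    qed
    show ?thesis unfolding L_def
    proof
      fix x assume "x \<in> fst ` range f - {0}"
      then obtain r where "x = fst (f r)" "x \<noteq> 0" by auto
      with fr[of r] show "x \<in> ?U" by simp
    qed
  qed
  have detS: "det ((\<Sum>i\<in>S. A i) + X) = (\<Sum>f\<in>FU. if L f \<subseteq> S then wt u f else 0)" if S: "S \<subseteq> ?U" for S
  proof -
    have jsS: "p \<in> JS S \<longleftrightarrow> p \<in> JS ?U \<and> fst p \<in> insert 0 S" for p
      using S by (cases p) (auto simp: JS_def)
    have LS: "L f \<subseteq> S \<longleftrightarrow> (\<forall>r. fst (f r) \<in> insert 0 S)" for f
      unfolding L_def by auto
    have "{f. \<forall>i. f i \<in> JS S} = {f \<in> FU. L f \<subseteq> S}"
      unfolding FU_def LS jsS by auto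
    then show ?thesis
      using decS[OF S] det_sum_outer[OF finJS[OF S], of u] sum.inter_filter[OF finFU] by simp
  qed
  have "(\<Sum>S\<in>Pow ?U. (-1) ^ (n - card S) * det ((\<Sum>i\<in>S. A i) + X))
      = (\<Sum>S\<in>Pow ?U. \<Sum>f\<in>FU. if L f \<subseteq> S then (-1) ^ (n - card S) * wt u f else 0)"
    by (intro sum.cong refl) (auto simp: detS sum_distrib_left intro!: sum.cong)
  also have "\<dots> = (\<Sum>f\<in>FU. \<Sum>S\<in>Pow ?U. if L f \<subseteq> S then (-1) ^ (n - card S) * wt u f else 0)"
    by (rule sum.swap)
  also have "\<dots> = (\<Sum>f\<in>FU. if L f = ?U then wt u f else 0)"
  proof (intro sum.cong refl)
    fix f assume f: "f \<in> FU"
    have "(\<Sum>S\<in>Pow ?U. if L f \<subseteq> S then (-1) ^ (n - card S) * wt u f else 0)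
       = (\<Sum>S\<in>{S. S \<subseteq> ?U \<and> L f \<subseteq> S}. (-1::real) ^ (card ?U - card S)) * wt u f"
      by (simp add: sum_distrib_right sum.inter_filter[symmetric] Pow_def conj_commute)
    also have "\<dots> = (if L f = ?U then wt u f else 0)"
      using alt_sum[OF _ LU[OF f]] by simp
    finally show "(\<Sum>S\<in>Pow ?U. if L f \<subseteq> S then (-1) ^ (n - card S) * wt u f else 0) = (if L f = ?U then wt u f else 0)" .
  qed
  also have "\<dots> = (\<Sum>f\<in>{f\<in>FU. L f = ?U}. wt u f)"
    by (simp add: sum.inter_filter[OF finFU])
  also have "\<dots> \<ge> 0"
  proof (rule wt_sum_nonneg)
    show "finite {f \<in> FU. L f = ?U}" using finFU by simp
    fix f p assume f: "f \<in> {f \<in> FU. L f = ?U}" and p: "p permutes (UNIV::'N set)"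
    have "range (f \<circ> p) = range f"
      using permutes_image[OF p] by (metis image_comp)
    then show "f \<circ> p \<in> {f \<in> FU. L f = ?U}"
      using f by (auto simp: FU_def L_def)
  qed
  finally have pos: "0 \<le> iter_Delta A n det X" using E by simp
  show ?thesis using E pos group_card[of n "\<lambda>S. det ((\<Sum>i\<in>S. A i) + X)"] by simp
qed


end
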